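(* Let $P\subset\mathbb R^d$ be a rational $d$-polytope, and let $\Delta_P$ be the decomposition of $\mathbb R^d$ into open cells determined by the arrangement $\mathcal A_P$ (defined in the context). Let $\bm u,\bm v\in\mathbb R^d$. If there is $\bm w\in\mathbb Z^d$ such that $\bm u$ and $\bm v+\bm w$ lie in the same open cell of $\Delta_P$ (i.e. $[\bm u]$ and $[\bm v]$ lie in the same cell of $\Delta_P/\mathbb Z^d$), then $\mathrm{TL}_{P,\bm u}(t)=\mathrm{TL}_{P,\bm v}(t)$ for all $t\in\mathbb Z_{\ge 0}$.
   Context: For $\bm a\in\mathbb R^d$, $b\in\mathbb R$, let $H_{\bm a,b}=\{\bm x:(\bm a,\bm x)=b\}$ and $H^{\ge}_{\bm a,b}=\{\bm x:(\bm a,\bm x)\ge b\}$, where $(\cdot,\cdot)$ is the standard inner product. A rational $d$-polytope $P\subset\mathbb R^d$ has a unique irredundant presentation $P=H^{\ge}_{\bm a_1,b_1}\cap\cdots\cap H^{\ge}_{\bm a_m,b_m}$ with each $(\bm a_i,b_i)\in\mathbb Z^{d+1}$ primitive (gcd of entries is 1); $N(P)=\{\bm a_1,\dots,\bm a_m\}$. The arrangement is $\mathcal A_P=\{H_{\bm a_i,k}: 1\le i\le m,\ k\in\mathbb Z\}$. The open cells of $\Delta_P$ are the nonempty sets $A_1\cap\cdots\cap A_m$ where each $A_i$ is either $H_{\bm a_i,k}$ or $\{\bm x: k<(\bm a_i,\bm x)<k+1\}$ for some $k\in\mathbb Z$. $[\bm v]$ denotes the image of $\bm v$ in $\mathbb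 R^d/\mathbb Z^d$; $\Delta_P/\mathbb Z^d$ is the induced cell decomposition of the torus. For a convex set $X\subset\mathbb R^d$ and $\bm v\in\mathbb R^d$, the translated lattice points enumerator is $\mathrm{TL}_{X,\bm v}(t)=\#((tX+\bm v)\cap\mathbb Z^d)$ for $t\in\mathbb Z_{\ge0}$. *)

theory Defs
  imports "HOL-Analysis.Analysis"
begin

text \<open>Points of R^d are modelled as real^'n (d = CARD('n)); integer vectors as int^'n.\<close>

definition ivec :: "int^'n \<Rightarrow> real^'n" where
  "ivec z = (\<chi> i. of_int (z $ i))"

definition ipair :: "int^'n \<Rightarrow> real^'n \<Rightarrow> real" where
  "ipair a x = ivec a \<bullet> x"

definition hyp :: "int^'n \<Rightarrow> int \<Rightarrow> (real^'n) set" where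
  "hyp a b = {x. ipair a x = of_int b}"

definition halfsp :: "int^'n \<Rightarrow> int \<Rightarrow> (real^'n) set" where
  "halfsp a b = {x. ipair a x \<ge> of_int b}"

definition primitive :: "int^'n \<Rightarrow> int \<Rightarrow> bool" where
  "primitive a b \<longleftrightarrow> Gcd (insert b (range (\<lambda>i. a $ i))) = 1"

definition rational_polytope :: "(real^'n) set \<Rightarrow> bool" where
  "rational_polytope P \<longleftrightarrow>
     (\<exists>V. finite V \<and> (\<forall>v\<in>V. \<forall>i. v $ i \<in> \<rat>) \<and> P = convex hull V)
     \<and> aff_dim P = int CARD('n)"

text \<open>N(P): the normals a_i of the unique irredundant primitive presentation,
  i.e. the primitive integer inward normals of the facets of P.\<close>
definition normals :: "(real^'n) set \<Rightarrow> (int^'n) set" where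
  "normals P = {a. \<exists>b. primitive a b \<and> P \<subseteq> halfsp a b \<and> (P \<inter> hyp a b) facet_of P}"

definition pieces :: "int^'n \<Rightarrow> (real^'n) set set" where
  "pieces a = {hyp a k | k. True} \<union> {{x. of_int k < ipair a x \<and> ipair a x < of_int k + 1} | k. True}"

definition open_cells :: "(real^'n) set \<Rightarrow> (real^'n) set set" where
  "open_cells P = {C. C \<noteq> {} \<and> (\<exists>A. (\<forall>a\<in>normals P. A a \<in> pieces a) \<and> C = (\<Inter>a\<in>normals P. A a))}"

definition TL :: "(real^'n) set \<Rightarrow> real^'n \<Rightarrow> nat \<Rightarrow> nat" where
  "TL X v t = card {z :: int^'n. ivec z \<in> (\<lambda>x. real t *\<^sub>R x + v) ` X}"

end

theory Submission
  imports Defs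
begin


lemma rat_normal:
  fixes B :: "(real^'n) set" and a :: "real^'n"
  assumes indB: "independent B" and cardB: "card B = CARD('n) - 1"
    and ratB: "\<forall>w\<in>B. \<forall>i. w$i \<in> \<rat>" and a0: "a \<noteq> 0" and aB: "\<forall>w\<in>B. a \<bullet> w = 0"
  shows "\<exists>c. (\<forall>i. c$i \<in> \<rat>) \<and> c \<noteq> 0 \<and> (\<exists>\<mu>. c = \<mu> *\<^sub>R a)"
proof -
  obtain j0 :: 'n where True by blast
  have finB: "finite B" using indB finiteI_independent by blast
  have ceq: "card (UNIV - {j0}) = card B" unfolding cardB by (rule card_Diff_singleton) simp
  have "\<exists>g. bij_betw g (UNIV - {j0}) B"
    by (rule finite_same_card_bij[OF _ finB ceq]) simp
  then obtain g where g: "bij_betw g (UNIV - {j0}) B" by blast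
  define M where "M x = ((\<chi> i. if i = j0 then x else g i) :: real^'n^'n)" for x
  define c where "c = (\<chi> k. det (M (axis k 1)))"
  have lin: "det (M x) = c \<bullet> x" for x
  proof -
    have "M x = (\<chi> i. if i = j0 then (\<Sum>k\<in>UNIV. x$k *s axis k 1) else g i)"
      unfolding M_def basis_expansion ..
    then have "det (M x) = (\<Sum>k\<in>UNIV. det ((\<chi> i. if i = j0 then x$k *s axis k 1 else g i)::real^'n^'n))"
      using det_linear_row_sum[where S=UNIV and k=j0 and a="\<lambda>i k. x$k *s axis k 1" and c=g] by simp
    also have "\<dots> = (\<Sum>k\<in>UNIV. x$k * c$k)"
      by (rule sum.cong) (auto simp: det_row_mul c_def M_def)
    finally show ?thesis by (simp add: inner_vec_def mult.commute)
  qed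
  have ent: "(M (axis k 1))$i$j \<in> \<rat>" for k i j
  proof (cases "i = j0")
    case True then show ?thesis by (simp add: M_def axis_def)
  next
    case False
    then have "g i \<in> B" using g by (auto simp: bij_betw_def)
    then show ?thesis using False ratB by (simp add: M_def)
  qed
  have ratc: "c$k \<in> \<rat>" for k
    unfolding c_def det_def vec_lambda_beta
    by (intro Rats_sum Rats_mult Rats_prod) (simp_all add: ent)
  have cB: "c \<bullet> w = 0" if "w \<in> B" for w
  proof -
    have "w \<in> g ` (UNIV - {j0})" using g that by (simp add: bij_betw_def)
    then obtain i where i: "i \<in> UNIV - {j0}" "g i = w" by blast
    have "det (M w) = 0"
      by (rule det_identical_rows[of i j0]) (use i in \<open>auto simp: row_def M_def\<close>)
    then show ?thesis using lin by simp
  qed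
  have "det (M a) \<noteq> 0"
  proof
    assume "det (M a) = 0"
    then have "\<not> invertible (M a)" by (simp add: invertible_det_nz)
    then have "\<not> (\<exists>(B'::real^'n^'n). M a ** B' = mat 1)" by (simp add: invertible_right_inverse)
    then have "\<not> (\<forall>c. (\<Sum>i\<in>UNIV. c i *s row i (M a)) = 0 \<longrightarrow> (\<forall>i. c i = 0))"
      using matrix_right_invertible_independent_rows[of "M a"] by blast
    then obtain cc where cc: "(\<Sum>i\<in>UNIV. cc i *s row i (M a)) = 0" and nz: "\<exists>i. cc i \<noteq> 0"
      by blast
    have rows: "row i (M a) = (if i = j0 then a else g i)" for i
      by (simp add: row_def M_def vec_eq_iff)
    have split: "(\<Sum>i\<in>UNIV. cc i *s row i (M a)) = cc j0 *\<^sub>R a + (\<Sum>i\<in>UNIV - {j0}. cc i *\<^sub>R g i)"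
      by (simp add: sum.remove[of UNIV j0] rows scalar_mult_eq_scaleR)
    have gB: "g i \<in> B" if "i \<in> UNIV - {j0}" for i
      using g that by (auto simp: bij_betw_def)
    have "\<forall>i\<in>UNIV - {j0}. a \<bullet> (cc i *\<^sub>R g i) = 0" using aB gB by simp
    then have h0: "a \<bullet> (\<Sum>i\<in>UNIV - {j0}. cc i *\<^sub>R g i) = 0"
      unfolding inner_sum_right by (rule sum.neutral)
    have "cc j0 *\<^sub>R a + (\<Sum>i\<in>UNIV - {j0}. cc i *\<^sub>R g i) = 0" using cc split by simp
    then have "a \<bullet> (cc j0 *\<^sub>R a + (\<Sum>i\<in>UNIV - {j0}. cc i *\<^sub>R g i)) = 0" by simp
    then have "a \<bullet> (cc j0 *\<^sub>R a) = 0" using h0 by (simp only: inner_add_right)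
    then have cj0: "cc j0 = 0" using a0 by simp
    then have s0: "(\<Sum>i\<in>UNIV - {j0}. cc i *\<^sub>R g i) = 0" using cc split by simp
    define d where "d w = cc (the_inv_into (UNIV - {j0}) g w)" for w
    have "(\<Sum>w\<in>B. d w *\<^sub>R w) = (\<Sum>i\<in>UNIV - {j0}. d (g i) *\<^sub>R g i)"
      using sum.reindex_bij_betw[OF g, of "\<lambda>w. d w *\<^sub>R w"] by simp
    also have "\<dots> = (\<Sum>i\<in>UNIV - {j0}. cc i *\<^sub>R g i)"
      by (rule sum.cong) (use g in \<open>auto simp: d_def bij_betw_def the_inv_into_f_f\<close>)
    finally have "(\<Sum>w\<in>B. d w *\<^sub>R w) = 0" using s0 by simp
    moreover have "\<forall>c. (\<Sum>v\<in>B. c v *\<^sub>R v) = 0 \<longrightarrow> (\<forall>v\<in>B. c v = 0)"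
      using indB unfolding independent_explicit by blast
    ultimately have dB: "\<forall>w\<in>B. d w = 0" by blast
    have dg: "d (g i) = cc i" if "i \<in> UNIV - {j0}" for i
      using that g by (simp add: d_def bij_betw_def the_inv_into_f_f)
    have "cc i = 0" if "i \<in> UNIV - {j0}" for i
    proof -
      have "d (g i) = 0" using dB gB[OF that] by blast
      then show ?thesis using dg[OF that] by simp
    qed
    then have ccz: "\<And>i. i \<noteq> j0 \<Longrightarrow> cc i = 0" by simp
    obtain i where "cc i \<noteq> 0" using nz by blast
    moreover have "cc i = 0" using cj0 ccz by (cases "i = j0") auto
    ultimately show False by simp
  qed
  then have ca: "c \<bullet> a \<noteq> 0" using lin by simp
  have hyp: "{x. a \<bullet> x = 0} \<subseteq> span B"
  proof -
    have s1: "span B \<subseteq> {x. a \<bullet> x = 0}"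
    proof (rule span_minimal)
      show "B \<subseteq> {x. a \<bullet> x = 0}" using aB by blast
      show "subspace {x. a \<bullet> x = 0}" by (rule subspace_hyperplane)
    qed
    have "dim (span B) = card B" by (simp only: dim_span dim_eq_card_independent[OF indB])
    moreover have "dim {x. a \<bullet> x = 0} = CARD('n) - 1" using dim_hyperplane[OF a0] by simp
    ultimately have "dim {x. a \<bullet> x = 0} \<le> dim (span B)" using cardB by simp
    then have "span B = {x. a \<bullet> x = 0}"
      using subspace_dim_equal[OF subspace_span subspace_hyperplane s1] by blast
    then show ?thesis by simp
  qed
  have cspan: "c \<bullet> y = 0" if "y \<in> span B" for y
  proof -
    have "span B \<subseteq> {x. c \<bullet> x = 0}"
    proof (rule span_minimal)
      show "B \<subseteq> {x. c \<bullet> x = 0}" using cB by blast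
      show "subspace {x. c \<bullet> x = 0}" by (rule subspace_hyperplane)
    qed
    then show ?thesis using that by blast
  qed
  define \<mu> where "\<mu> = (c \<bullet> a) / (a \<bullet> a)"
  define y where "y = c - \<mu> *\<^sub>R a"
  have aa: "a \<bullet> a \<noteq> 0" using a0 by simp
  have "a \<bullet> y = a \<bullet> c - \<mu> * (a \<bullet> a)" by (simp add: y_def inner_diff_right)
  also have "\<dots> = 0" using aa by (simp add: \<mu>_def inner_commute[of a c])
  finally have ay: "a \<bullet> y = 0" .
  then have cy: "c \<bullet> y = 0" using hyp cspan by blast
  have "y \<bullet> y = c \<bullet> y - \<mu> * (a \<bullet> y)" by (simp add: y_def inner_diff_left)
  then have "y \<bullet> y = 0" using ay cy by simp
  then have "y = 0" by simp
  then have "c = \<mu> *\<^sub>R a" by (simp add: y_def)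
  moreover have "c \<noteq> 0" using ca by auto
  ultimately show ?thesis using ratc by blast
qed



lemma L_prim:
  fixes \<alpha>0 :: "int^'n" and \<beta>0 :: int
  assumes "\<alpha>0 \<noteq> 0"
  shows "\<exists>\<alpha> \<beta> (g::int). g > 0 \<and> (\<forall>i. \<alpha>0$i = g * \<alpha>$i) \<and> \<beta>0 = g * \<beta> \<and> primitive \<alpha> \<beta>"
proof -
  define S where "S = insert \<beta>0 (range (\<lambda>i. \<alpha>0$i))"
  define g where "g = Gcd S"
  obtain i0 where i0: "\<alpha>0$i0 \<noteq> 0" using assms by (metis vec_eq_iff zero_index)
  have "g \<noteq> 0" using i0 by (auto simp: g_def S_def Gcd_0_iff)
  moreover have "g \<ge> 0" unfolding g_def by simp
  ultimately have gpos: "g > 0" by simp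
  have gdvd: "g dvd x" if "x \<in> S" for x using that by (simp add: g_def Gcd_dvd)
  define \<alpha> where "\<alpha> = (\<chi> i. \<alpha>0$i div g)"
  define \<beta> where "\<beta> = \<beta>0 div g"
  have ha: "\<alpha>0$i = g * \<alpha>$i" for i using gdvd[of "\<alpha>0$i"] by (simp add: \<alpha>_def S_def)
  have hb: "\<beta>0 = g * \<beta>" using gdvd[of \<beta>0] by (simp add: \<beta>_def S_def)
  define h where "h = Gcd (insert \<beta> (range (\<lambda>i. \<alpha>$i)))"
  have "g * h dvd x" if "x \<in> S" for x
  proof -
    from that consider "x = \<beta>0" | i where "x = \<alpha>0$i" by (auto simp: S_def)
    then show ?thesis
    proof cases
      case 1
      have "h dvd \<beta>" unfolding h_def by (rule Gcd_dvd) auto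
      then show ?thesis using 1 hb by (simp add: mult_dvd_mono)
    next
      case (2 i)
      have "h dvd \<alpha>$i" unfolding h_def by (rule Gcd_dvd) auto
      then show ?thesis using 2 ha by (simp add: mult_dvd_mono)
    qed
  qed
  then have "g * h dvd g" unfolding g_def using Gcd_greatest by blast
  then have "g * h dvd g * 1" by simp
  then have "h dvd 1" using gpos by (subst (asm) dvd_times_left_cancel_iff) auto
  moreover have "h \<ge> 0" unfolding h_def by simp
  ultimately have "h = 1" by simp
  then have "primitive \<alpha> \<beta>" by (simp add: primitive_def h_def)
  then show ?thesis using gpos ha hb by blast
qed

lemma L_final:
  fixes \<alpha>0 :: "int^'n" and \<beta>0 :: int and a :: "real^'n"
  assumes a0: "a \<noteq> 0" and ha: "ivec \<alpha>0 = lam *\<^sub>R a" and hb: "of_int \<beta>0 = lam * b" and l: "lam < 0"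
  shows "\<exists>\<alpha> \<beta>. primitive \<alpha> \<beta> \<and> halfsp \<alpha> \<beta> = {x. a \<bullet> x \<le> b} \<and> hyp \<alpha> \<beta> = {x. a \<bullet> x = b}"
proof -
  have "\<alpha>0 \<noteq> 0"
  proof
    assume "\<alpha>0 = 0"
    then have "ivec \<alpha>0 = 0" by (simp add: ivec_def vec_eq_iff)
    with ha a0 l show False by simp
  qed
  then obtain \<alpha> \<beta> and g :: int where g: "g > 0" "\<forall>i. \<alpha>0$i = g * \<alpha>$i" "\<beta>0 = g * \<beta>" "primitive \<alpha> \<beta>"
    using L_prim by blast
  define m where "m = lam / of_int g"
  have m: "m < 0" using l g by (simp add: m_def divide_neg_pos)
  have ia: "ivec \<alpha> = m *\<^sub>R a"
  proof -
    have "ivec \<alpha>0 = of_int g *\<^sub>R ivec \<alpha>" using g by (simp add: ivec_def vec_eq_iff)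
    then have "lam *\<^sub>R a = of_int g *\<^sub>R ivec \<alpha>" using ha by simp
    then have "inverse (of_int g) *\<^sub>R (lam *\<^sub>R a) = ivec \<alpha>" using g by simp
    then show ?thesis by (simp add: m_def divide_inverse mult.commute)
  qed
  have ib: "of_int \<beta> = m * b" using hb g by (simp add: m_def field_simps)
  have "halfsp \<alpha> \<beta> = {x. a \<bullet> x \<le> b}"
    using m by (auto simp: halfsp_def ipair_def ia ib mult_le_cancel_left_neg)
  moreover have "hyp \<alpha> \<beta> = {x. a \<bullet> x = b}"
    using m by (auto simp: hyp_def ipair_def ia ib)
  ultimately show ?thesis using g by blast
qed

lemma rat_denom: "(q::real) \<in> \<rat> \<Longrightarrow> \<exists>N::int. N > 0 \<and> of_int N * q \<in> \<int>"
  by (erule Rats_cases') (auto intro!: exI simp: field_simps)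

lemma common_denom:
  fixes f :: "'i \<Rightarrow> real"
  assumes "finite I" "\<forall>i\<in>I. f i \<in> \<rat>"
  shows "\<exists>N::int. N > 0 \<and> (\<forall>i\<in>I. of_int N * f i \<in> \<int>)"
  using assms
proof (induction I rule: finite_induct)
  case empty then show ?case by (intro exI[of _ 1]) auto
next
  case (insert x I)
  then obtain N where N: "N > 0" "\<forall>i\<in>I. of_int N * f i \<in> \<int>" by auto
  obtain m where m: "m > 0" "of_int m * f x \<in> \<int>" using rat_denom insert by blast
  have "\<forall>i\<in>insert x I. of_int (N*m) * f i \<in> \<int>"
  proof
    fix i assume "i \<in> insert x I"
    then show "of_int (N*m) * f i \<in> \<int>"
    proof
      assume "i = x"
      then have "of_int (N*m) * f i = of_int N * (of_int m * f x)" by simp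
      then show ?thesis using m by (metis Ints_mult Ints_of_int)
    next
      assume "i \<in> I"
      then have "of_int (N*m) * f i = of_int m * (of_int N * f i)" by simp
      then show ?thesis using N \<open>i \<in> I\<close> by (metis Ints_mult Ints_of_int)
    qed
  qed
  then show ?case using N m by (intro exI[of _ "N*m"]) auto
qed



lemma Ints_floor_eq: "(x::real) \<in> \<int> \<Longrightarrow> of_int \<lfloor>x\<rfloor> = x"
  by (erule Ints_cases) simp

lemma facet_rat:
  fixes P :: "(real^'n) set" and a :: "real^'n"
  assumes rp: "rational_polytope P" and a0: "a \<noteq> 0" and Psub: "P \<subseteq> {x. a \<bullet> x \<le> b}"
    and fac: "(P \<inter> {x. a \<bullet> x = b}) facet_of P"
  shows "\<exists>\<alpha> \<beta>. primitive \<alpha> \<beta> \<and> halfsp \<alpha> \<beta> = {x. a \<bullet> x \<le> b} \<and> hyp \<alpha> \<beta> = {x. a \<bullet> x = b}"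
proof -
  obtain V where V: "finite V" "\<forall>v\<in>V. \<forall>i. v$i \<in> \<rat>" "P = convex hull V"
    and dimP: "aff_dim P = int CARD('n)"
    using rp unfolding rational_polytope_def by blast
  define C where "C = P \<inter> {x. a \<bullet> x = b}"
  have "C face_of convex hull V" using fac V(3) facet_of_imp_face_of unfolding C_def by simp
  then obtain T where T: "T \<subseteq> V" "C = convex hull T"
    using face_of_convex_hull_subset[OF finite_imp_compact[OF V(1)]] by blast
  have "aff_dim C = aff_dim P - 1" using fac by (simp add: facet_of_def C_def)
  then have dT: "aff_dim T = int CARD('n) - 1" using T dimP by (simp add: aff_dim_convex_hull)
  have c1: "CARD('n) \<ge> 1" by (simp add: Suc_leI)
  have "T \<noteq> {}"
  proof
    assume "T = {}" then have "aff_dim T = -1" by simp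
    with dT c1 show False by simp
  qed
  then obtain t0 where t0: "t0 \<in> T" by blast
  define D where "D = (+) (- t0) ` T"
  have "aff_dim T = int (dim D)" unfolding D_def by (rule aff_dim_eq_dim) (simp add: hull_inc t0)
  then have dD: "dim D = CARD('n) - 1" using dT c1 by linarith
  obtain Bs where Bs: "Bs \<subseteq> D" "independent Bs" "D \<subseteq> span Bs" "card Bs = dim D"
    by (rule basis_exists)
  have TC: "T \<subseteq> C" unfolding T(2) by (rule hull_subset)
  have t0V: "t0 \<in> V" using t0 T(1) by blast
  have aT: "a \<bullet> t = b" if "t \<in> T" for t using that TC unfolding C_def by blast
  have ratBs: "\<forall>w\<in>Bs. \<forall>i. w$i \<in> \<rat>"
  proof (intro ballI allI)
    fix w i assume "w \<in> Bs"
    then obtain t where t: "t \<in> T" "w = - t0 + t" using Bs(1) unfolding D_def by blast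
    then have "t \<in> V" using T(1) by blast
    then have "t$i \<in> \<rat>" "t0$i \<in> \<rat>" using V(2) t0V by auto
    then show "w$i \<in> \<rat>" using t(2) by simp
  qed
  have aBs: "\<forall>w\<in>Bs. a \<bullet> w = 0"
  proof
    fix w assume "w \<in> Bs"
    then obtain t where t: "t \<in> T" "w = - t0 + t" using Bs(1) unfolding D_def by blast
    then show "a \<bullet> w = 0" using aT[OF t(1)] aT[OF t0] by (simp add: inner_add_right inner_diff_right)
  qed
  obtain c \<mu> where c: "\<forall>i. c$i \<in> \<rat>" "c \<noteq> 0" "c = \<mu> *\<^sub>R a"
    using rat_normal[OF Bs(2) _ ratBs a0 aBs] Bs(4) dD by auto
  have mu0: "\<mu> \<noteq> 0" using c by auto
  obtain N1 :: int where N1: "N1 > 0" "\<forall>i\<in>UNIV. of_int N1 * c$i \<in> \<int>"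
    using common_denom[of UNIV "\<lambda>i. c$i"] c(1) by auto
  define c1 where "c1 = of_int N1 *\<^sub>R c"
  have "c1 \<bullet> t0 \<in> \<rat>"
    unfolding inner_vec_def c1_def using c(1) V(2) t0V by (auto intro!: Rats_sum)
  then obtain N2 :: int where N2: "N2 > 0" "of_int N2 * (c1 \<bullet> t0) \<in> \<int>"
    using rat_denom by blast
  define lam2 where "lam2 = of_int N2 * of_int N1 * \<mu>"
  have lam2: "lam2 \<noteq> 0" using N1 N2 mu0 by (simp add: lam2_def)
  define c2 where "c2 = of_int N2 *\<^sub>R c1"
  have c2a: "c2 = lam2 *\<^sub>R a" by (simp add: c2_def c1_def c(3) lam2_def)
  have c2i: "c2$i \<in> \<int>" for i
  proof -
    have "c2$i = of_int N2 * (of_int N1 * c$i)" by (simp add: c2_def c1_def)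
    moreover have "of_int N1 * c$i \<in> \<int>" using N1 by blast
    ultimately show ?thesis by (simp add: Ints_mult)
  qed
  have "a \<bullet> t0 = b" using aT[OF t0] .
  then have b2: "of_int N2 * (c1 \<bullet> t0) = lam2 * b"
  proof -
    have "of_int N2 * (c1 \<bullet> t0) = c2 \<bullet> t0" by (simp add: c2_def)
    also have "\<dots> = lam2 * (a \<bullet> t0)" by (simp add: c2a)
    finally show ?thesis using \<open>a \<bullet> t0 = b\<close> by simp
  qed
  define s :: real where "s = (if lam2 < 0 then 1 else -1)"
  define lam3 where "lam3 = s * lam2"
  have lam3: "lam3 < 0" using lam2 by (auto simp: lam3_def s_def)
  have c3i: "(s *\<^sub>R c2)$i \<in> \<int>" for i using c2i[of i] by (auto simp: s_def)
  have b3i: "s * (of_int N2 * (c1 \<bullet> t0)) \<in> \<int>" using N2 by (auto simp: s_def)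
  define \<alpha>0 where "\<alpha>0 = (\<chi> i. \<lfloor>(s *\<^sub>R c2)$i\<rfloor>)"
  define \<beta>0 where "\<beta>0 = \<lfloor>s * (of_int N2 * (c1 \<bullet> t0))\<rfloor>"
  have "ivec \<alpha>0 = s *\<^sub>R c2"
    by (simp add: ivec_def \<alpha>0_def vec_eq_iff Ints_floor_eq[OF c3i] del: vector_scaleR_component)
  then have ha: "ivec \<alpha>0 = lam3 *\<^sub>R a" by (simp add: c2a lam3_def)
  have "of_int \<beta>0 = s * (of_int N2 * (c1 \<bullet> t0))" unfolding \<beta>0_def by (rule Ints_floor_eq[OF b3i])
  then have hb: "of_int \<beta>0 = lam3 * b" by (simp add: b2 lam3_def)
  show ?thesis by (rule L_final[OF a0 ha hb lam3])
qed



lemma rep: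
  fixes P :: "(real^'n) set"
  assumes rp: "rational_polytope P"
  shows "P = {x. \<forall>\<alpha> \<beta>. primitive \<alpha> \<beta> \<and> P \<subseteq> halfsp \<alpha> \<beta> \<and> (P \<inter> hyp \<alpha> \<beta>) facet_of P \<longrightarrow> x \<in> halfsp \<alpha> \<beta>}"
    (is "P = ?R")
proof
  show "P \<subseteq> ?R" by blast
next
  obtain V where V: "finite V" "P = convex hull V" and dimP: "aff_dim P = int CARD('n)"
    using rp unfolding rational_polytope_def by blast
  have "polytope P" unfolding polytope_def using V by blast
  then have poly: "polyhedron P" by (rule polytope_imp_polyhedron)
  have ah: "affine hull P = UNIV" using dimP aff_dim_eq_full[of P] by simp
  obtain F where F: "finite F" "P = affine hull P \<inter> \<Inter>F"
      "\<forall>h\<in>F. \<exists>a b. a \<noteq> 0 \<and> h = {x. a \<bullet> x \<le> b}"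
      "\<forall>F'. F' \<subset> F \<longrightarrow> P \<subset> affine hull P \<inter> \<Inter>F'"
    using poly unfolding polyhedron_Int_affine_minimal by blast
  obtain a b where ab: "\<forall>h\<in>F. a h \<noteq> 0 \<and> h = {x. a h \<bullet> x \<le> b h}"
    using F(3) by metis
  show "?R \<subseteq> P"
  proof
    fix x assume x: "x \<in> ?R"
    have "x \<in> h" if h: "h \<in> F" for h
    proof -
      have fac: "(P \<inter> {x. a h \<bullet> x = b h}) facet_of P"
        using facet_of_polyhedron_explicit[OF F(1) F(2), of a b] ab F(4) h by blast
      have sub: "P \<subseteq> {x. a h \<bullet> x \<le> b h}" using F(2) h ab by blast
      obtain \<alpha> \<beta> where ab2: "primitive \<alpha> \<beta>" "halfsp \<alpha> \<beta> = {x. a h \<bullet> x \<le> b h}" "hyp \<alpha> \<beta> = {x. a h \<bullet> x = b h}"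
        using facet_rat[OF rp _ sub fac] ab h by blast
      have p1: "P \<subseteq> halfsp \<alpha> \<beta>" using sub ab2(2) by simp
      have p2: "(P \<inter> hyp \<alpha> \<beta>) facet_of P" using fac ab2(3) by simp
      have "x \<in> halfsp \<alpha> \<beta>" using x ab2(1) p1 p2 by blast
      then show ?thesis using ab2(2) ab h by blast
    qed
    then show "x \<in> P" using F(2) ah by blast
  qed
qed

lemma ipair_add: "ipair a (x + y) = ipair a x + ipair a y"
  by (simp add: ipair_def inner_add_right)
lemma ipair_scale: "ipair a (c *\<^sub>R x) = c * ipair a x"
  by (simp add: ipair_def)
lemma ipair_diff: "ipair a (x - y) = ipair a x - ipair a y"
  by (simp add: ipair_def inner_diff_right)
lemma ipair_int: "ipair a (ivec z) = of_int (\<Sum>i\<in>UNIV. a$i * z$i)"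
  by (simp add: ipair_def ivec_def inner_vec_def)
lemma ivec_add: "ivec (z + w) = ivec z + ivec w"
  by (simp add: ivec_def vec_eq_iff)

definition same :: "int^'n \<Rightarrow> real^'n \<Rightarrow> real^'n \<Rightarrow> bool" where
  "same \<alpha> x y \<longleftrightarrow> (\<forall>n::int. (of_int n \<ge> ipair \<alpha> x \<longleftrightarrow> of_int n \<ge> ipair \<alpha> y)
     \<and> (ipair \<alpha> x = of_int n \<longleftrightarrow> ipair \<alpha> y = of_int n))"

lemma same_sym: "same \<alpha> x y \<Longrightarrow> same \<alpha> y x"
  unfolding same_def by metis

lemma piece_same:
  assumes "A \<in> pieces \<alpha>" "x \<in> A" "y \<in> A"
  shows "same \<alpha> x y"
proof -
  from assms(1) consider k where "A = hyp \<alpha> k"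
    | k where "A = {x. of_int k < ipair \<alpha> x \<and> ipair \<alpha> x < of_int k + 1}"
    unfolding pieces_def by blast
  then show ?thesis
  proof cases
    case 1 then show ?thesis using assms by (simp add: same_def hyp_def)
  next
    case (2 k)
    have key: "(of_int n \<ge> z \<longleftrightarrow> n \<ge> k + 1) \<and> z \<noteq> of_int n"
      if z: "of_int k < z" "z < of_int k + 1" for z :: real and n :: int
    proof -
      have A: "z \<le> of_int n" if "k + 1 \<le> n"
      proof -
        have "real_of_int (k + 1) \<le> of_int n" using that by (simp only: of_int_le_iff)
        then show ?thesis using z by simp
      qed
      have B: "k + 1 \<le> n" if "z \<le> of_int n"
      proof -
        have "real_of_int k < of_int n" using that z by simp
        then have "k < n" by (simp only: of_int_less_iff)
        then show ?thesis by simp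
      qed
      have C: "z \<noteq> of_int n"
      proof
        assume "z = of_int n"
        then have "real_of_int k < of_int n" "real_of_int n < of_int (k + 1)" using z by simp_all
        then have "k < n" "n < k + 1" by (simp_all only: of_int_less_iff)
        then show False by simp
      qed
      show ?thesis using A B C by blast
    qed
    show ?thesis using assms 2 key unfolding same_def by auto
  qed
qed



lemma key:
  fixes P :: "(real^'n) set"
  assumes rp: "rational_polytope P" and sm: "\<forall>\<alpha>\<in>normals P. same \<alpha> x y"
    and z: "ivec z \<in> (\<lambda>p. real t *\<^sub>R p + x) ` P"
  shows "ivec z \<in> (\<lambda>p. real t *\<^sub>R p + y) ` P"
proof -
  obtain p where p: "p \<in> P" "ivec z = real t *\<^sub>R p + x" using z by blast
  have mem: "q \<in> P" if "\<And>\<alpha> \<beta>. primitive \<alpha> \<beta> \<Longrightarrow> P \<subseteq> halfsp \<alpha> \<beta> \<Longrightarrow> (P \<inter> hyp \<alpha> \<beta>) facet_of P \<Longrightarrow> q \<in> halfsp \<alpha> \<beta>" for q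
  proof -
    have "q \<in> {x. \<forall>\<alpha> \<beta>. primitive \<alpha> \<beta> \<and> P \<subseteq> halfsp \<alpha> \<beta> \<and> (P \<inter> hyp \<alpha> \<beta>) facet_of P \<longrightarrow> x \<in> halfsp \<alpha> \<beta>}"
      using that by blast
    then show ?thesis using rep[OF rp] by blast
  qed
  have nrm: "\<alpha> \<in> normals P" if "primitive \<alpha> \<beta>" "P \<subseteq> halfsp \<alpha> \<beta>" "(P \<inter> hyp \<alpha> \<beta>) facet_of P" for \<alpha> \<beta>
    using that unfolding normals_def by blast
  show ?thesis
  proof (cases "t = 0")
    case True
    then have xz: "x = ivec z" using p by simp
    define d where "d = y - x"
    have d0: "ipair \<alpha> d = 0" if "\<alpha> \<in> normals P" for \<alpha>
    proof -
      have "ipair \<alpha> x = of_int (\<Sum>i\<in>UNIV. \<alpha>$i * z$i)" using xz ipair_int by simp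
      then have "ipair \<alpha> y = of_int (\<Sum>i\<in>UNIV. \<alpha>$i * z$i)"
        using sm that unfolding same_def by blast
      then show ?thesis using \<open>ipair \<alpha> x = _\<close> by (simp add: d_def ipair_diff)
    qed
    have line: "p + s *\<^sub>R d \<in> P" for s
    proof (rule mem)
      fix \<alpha> \<beta> assume h: "primitive \<alpha> \<beta>" "P \<subseteq> halfsp \<alpha> \<beta>" "(P \<inter> hyp \<alpha> \<beta>) facet_of P"
      then have "\<alpha> \<in> normals P" by (rule nrm)
      then have "ipair \<alpha> (p + s *\<^sub>R d) = ipair \<alpha> p" using d0 by (simp add: ipair_add ipair_scale)
      moreover have "p \<in> halfsp \<alpha> \<beta>" using h p by blast
      ultimately show "p + s *\<^sub>R d \<in> halfsp \<alpha> \<beta>" by (simp add: halfsp_def)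
    qed
    obtain V where V: "finite V" "P = convex hull V"
      using rp unfolding rational_polytope_def by blast
    have "bounded P" using V by (simp add: compact_imp_bounded finite_imp_compact_convex_hull)
    then obtain B where B: "\<forall>q\<in>P. norm q \<le> B" unfolding bounded_iff by blast
    have "d = 0"
    proof (rule ccontr)
      assume "d \<noteq> 0"
      then have nd: "norm d > 0" by simp
      define s where "s = (B + norm p + 1) / norm d"
      have "B \<ge> 0" using B p(1) norm_ge_zero order_trans by blast
      then have s0: "s \<ge> 0" using nd by (simp add: s_def)
      have "norm (s *\<^sub>R d) = B + norm p + 1" using nd s0 \<open>B \<ge> 0\<close> by (simp add: s_def)
      moreover have "norm (s *\<^sub>R d) \<le> norm (p + s *\<^sub>R d) + norm p"
        using norm_triangle_ineq4[of "p + s *\<^sub>R d" p] by simp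
      moreover have "norm (p + s *\<^sub>R d) \<le> B" using B line by blast
      ultimately show False by linarith
    qed
    then have "y = ivec z" using xz by (simp add: d_def)
    then show ?thesis using p(1) True by (auto simp: image_iff)
  next
    case False
    then have tpos: "real t > 0" by simp
    define p' where "p' = (1 / real t) *\<^sub>R (ivec z - y)"
    have "p' \<in> P"
    proof (rule mem)
      fix \<alpha> \<beta> assume h: "primitive \<alpha> \<beta>" "P \<subseteq> halfsp \<alpha> \<beta>" "(P \<inter> hyp \<alpha> \<beta>) facet_of P"
      then have an: "\<alpha> \<in> normals P" by (rule nrm)
      have pb: "ipair \<alpha> p \<ge> of_int \<beta>" using h p unfolding halfsp_def by blast
      define n where "n = (\<Sum>i\<in>UNIV. \<alpha>$i * z$i) - int t * \<beta>"
      have iz: "ipair \<alpha> (ivec z) = real t * ipair \<alpha> p + ipair \<alpha> x"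
        using p(2) by (simp add: ipair_add ipair_scale)
      have nz: "of_int n = ipair \<alpha> (ivec z) - real t * of_int \<beta>"
        by (simp add: n_def ipair_int)
      have "real t * of_int \<beta> \<le> real t * ipair \<alpha> p" using pb tpos by simp
      then have "of_int n \<ge> ipair \<alpha> x" using iz nz by linarith
      then have ny: "of_int n \<ge> ipair \<alpha> y" using sm an unfolding same_def by blast
      have "ipair \<alpha> p' = (ipair \<alpha> (ivec z) - ipair \<alpha> y) / real t"
        by (simp add: p'_def ipair_scale ipair_diff)
      moreover have "ipair \<alpha> (ivec z) - ipair \<alpha> y \<ge> real t * of_int \<beta>" using ny nz by linarith
      ultimately have "ipair \<alpha> p' \<ge> of_int \<beta>" using tpos by (simp add: pos_le_divide_eq mult.commute)
      then show "p' \<in> halfsp \<alpha> \<beta>" by (simp add: halfsp_def)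
    qed
    moreover have "ivec z = real t *\<^sub>R p' + y" using tpos by (simp add: p'_def)
    ultimately show ?thesis by blast
  qed
qed

lemma TL_shift:
  fixes P :: "(real^'n) set" and v :: "real^'n" and w :: "int^'n"
  shows "TL P v t = TL P (v + ivec w) t"
proof -
  have "{z. ivec z \<in> (\<lambda>x. real t *\<^sub>R x + (v + ivec w)) ` P} = (\<lambda>z. z + w) ` {z. ivec z \<in> (\<lambda>x. real t *\<^sub>R x + v) ` P}"
  proof (rule set_eqI, rule iffI)
    fix z assume "z \<in> {z. ivec z \<in> (\<lambda>x. real t *\<^sub>R x + (v + ivec w)) ` P}"
    then obtain q where "q \<in> P" "ivec z = real t *\<^sub>R q + (v + ivec w)" by blast
    then have "ivec (z - w) = real t *\<^sub>R q + v" by (simp add: ivec_def vec_eq_iff)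
    then have "z - w \<in> {z. ivec z \<in> (\<lambda>x. real t *\<^sub>R x + v) ` P}" using \<open>q \<in> P\<close> by blast
    then show "z \<in> (\<lambda>z. z + w) ` {z. ivec z \<in> (\<lambda>x. real t *\<^sub>R x + v) ` P}"
      by (rule rev_image_eqI) simp
  next
    fix z assume "z \<in> (\<lambda>z. z + w) ` {z. ivec z \<in> (\<lambda>x. real t *\<^sub>R x + v) ` P}"
    then obtain z0 q where "z = z0 + w" "q \<in> P" "ivec z0 = real t *\<^sub>R q + v" by blast
    then have "ivec z = real t *\<^sub>R q + (v + ivec w)" by (simp add: ivec_add)
    then show "z \<in> {z. ivec z \<in> (\<lambda>x. real t *\<^sub>R x + (v + ivec w)) ` P}" using \<open>q \<in> P\<close> by blast
  qed
  moreover have "inj (\<lambda>z::int^'n. z + w)" by (simp add: inj_def)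
  ultimately show ?thesis unfolding TL_def by (simp add: card_image inj_on_subset)
qed

theorem theorem1p2:
  fixes P :: "(real^'n) set" and u v :: "real^'n"
  assumes "rational_polytope P"
    and "\<exists>w :: int^'n. \<exists>C\<in>open_cells P. u \<in> C \<and> v + ivec w \<in> C"
  shows "\<forall>t::nat. TL P u t = TL P v t"
proof
  fix t :: nat
  obtain w C where C: "C \<in> open_cells P" "u \<in> C" "v + ivec w \<in> C" using assms(2) by blast
  then obtain A where A: "\<forall>a\<in>normals P. A a \<in> pieces a" "C = (\<Inter>a\<in>normals P. A a)"
    unfolding open_cells_def by blast
  define v' where "v' = v + ivec w"
  have sm: "\<forall>\<alpha>\<in>normals P. same \<alpha> u v'"
  proof
    fix \<alpha> assume h: "\<alpha> \<in> normals P"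
    have "u \<in> A \<alpha>" "v' \<in> A \<alpha>" using C A h by (auto simp: v'_def)
    then show "same \<alpha> u v'" using piece_same A(1) h by blast
  qed
  then have sm': "\<forall>\<alpha>\<in>normals P. same \<alpha> v' u" using same_sym by blast
  have "{z. ivec z \<in> (\<lambda>x. real t *\<^sub>R x + u) ` P} = {z. ivec z \<in> (\<lambda>x. real t *\<^sub>R x + v') ` P}"
    using key[OF assms(1) sm] key[OF assms(1) sm'] by blast
  then have "TL P u t = TL P v' t" unfolding TL_def by simp
  then show "TL P u t = TL P v t" using TL_shift[of P v t w] by (simp add: v'_def)
qed


end
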